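(* There exist absolute constants $c_*>0$, $K>0$ and $p_0$ such that for every prime $p\geqslant p_0$, the number $T(p)$ of ordered triples $(A,B,C)$ of subsets of $\mathbb{F}_p$ such that $x+y\neq z$ for all $x\in A$, $y\in B$, $z\in C$ satisfies $$|T(p)-3\cdot 4^p|\leqslant K(4-c_* )^p .$$
   Context: $\mathbb{F}_p$ is the field with $p$ elements, viewed as an additive group. The subsets $A,B,C$ may be empty. *)

theory Defs
  imports Complex_Main "HOL-Computational_Algebra.Primes"
begin

definition T :: "nat \<Rightarrow> nat" where
  "T p = card {(A, B, C). A \<subseteq> {0..<p} \<and> B \<subseteq> {0..<p} \<and> C \<subseteq> {0..<p} \<and>
                 (\<forall>x\<in>A. \<forall>y\<in>B. \<forall>z\<in>C. (x + y) mod p \<noteq> z)}"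

end

theory Submission
  imports Defs "HOL-Computational_Algebra.Primes" "HOL-Real_Asymp.Real_Asymp"
begin
type_synonym cfg = "bool \<times> bool \<times> bool \<times> bool \<times> bool \<times> bool"
fun valid :: "cfg \<Rightarrow> bool" where
 "valid (a1,b1,c1,a2,b2,c2) = (\<not>(c1\<and>b1) \<and> \<not>(c1\<and>a1) \<and> \<not>(a1\<and>b2) \<and> \<not>(c2\<and>b2) \<and> \<not>(c2\<and>a2) \<and> \<not>(a2\<and>b1))"
fun compat :: "cfg \<Rightarrow> cfg \<Rightarrow> bool" where
 "compat (a1,b1,c1,a2,b2,c2) (a1',b1',c1',a2',b2',c2') = (\<not>(c1'\<and>b1) \<and> \<not>(c2\<and>b2'))"
fun wt :: "cfg \<Rightarrow> nat" where
 "wt (a1,b1,c1,a2,b2,c2) = (if c1 then (if b2 then 51 else 70) else (if b2 then 70 else 100))"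
definition bl :: "bool list" where "bl = [False, True]"
definition cfgs :: "cfg list" where
 "cfgs = List.product bl (List.product bl (List.product bl (List.product bl (List.product bl bl))))"
lemma bl_UNIV: "set bl = UNIV" unfolding bl_def by auto
lemma cfgs_UNIV: "set cfgs = UNIV" unfolding cfgs_def by (simp add: bl_UNIV)
lemma cfgs_dist: "distinct cfgs" unfolding cfgs_def by (simp add: distinct_product bl_def)
fun ok2 :: "bool \<Rightarrow> bool \<Rightarrow> cfg \<Rightarrow> bool" where
 "ok2 c b (a1,b1,c1,a2,b2,c2) = (\<not>(c\<and>b1) \<and> \<not>(c2\<and>b))"
fun wt2 :: "bool \<Rightarrow> bool \<Rightarrow> nat" where
 "wt2 c b = (if c then (if b then 51 else 70) else (if b then 70 else 100))"
lemma kk: "2 * sum_list (map (\<lambda>x. if valid x \<and> ok2 c b x then wt x else 0) cfgs) \<le> 31 * wt2 c b"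
  by (cases c; cases b; simp add: cfgs_def bl_def)
lemma key: "2 * (\<Sum>x\<in>{x. valid x \<and> compat x y}. wt x) \<le> 31 * wt y"
proof -
  obtain a1 b1 c1 a2 b2 c2 where y: "y = (a1,b1,c1,a2,b2,c2)" by (cases y) auto
  have e1: "\<And>x. compat x y = ok2 c1 b2 x" unfolding y by (case_tac x) auto
  have "(\<Sum>x\<in>{x. valid x \<and> compat x y}. wt x) = (\<Sum>x\<in>UNIV. if valid x \<and> ok2 c1 b2 x then wt x else 0)"
    using sum.inter_filter[of "UNIV::cfg set" wt "\<lambda>x. valid x \<and> ok2 c1 b2 x"] e1 by simp
  also have "\<dots> = sum_list (map (\<lambda>x. if valid x \<and> ok2 c1 b2 x then wt x else 0) cfgs)"
    using sum_list_distinct_conv_sum_set[OF cfgs_dist, of "\<lambda>x. if valid x \<and> ok2 c1 b2 x then wt x else 0"]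
    unfolding cfgs_UNIV by simp
  finally show ?thesis using kk[of c1 b2] y by simp
qed

declare valid.simps[simp del] compat.simps[simp del] wt.simps[simp del]

fun good :: "cfg list \<Rightarrow> bool" where
  "good [] = True" | "good [x] = valid x" | "good (x#y#xs) = (valid x \<and> compat x y \<and> good (y#xs))"

definition G :: "nat \<Rightarrow> cfg list set" where "G n = {xs. length xs = n \<and> good xs}"

lemma finG: "finite (G n)"
proof -
  have "G n \<subseteq> {xs. set xs \<subseteq> UNIV \<and> length xs = n}" unfolding G_def by auto
  thus ?thesis using finite_lists_length_eq[of "UNIV::cfg set" n] finite_subset by auto
qed

lemma G_Suc: "G (Suc (Suc n)) = (\<lambda>(ys,x). x#ys) ` (SIGMA ys:G (Suc n). {x. valid x \<and> compat x (hd ys)})"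
proof (rule set_eqI, rule iffI)
  fix zs assume "zs \<in> G (Suc (Suc n))"
  then obtain x y ys where z: "zs = x#y#ys" and l: "length ys = n" and g: "good (x#y#ys)"
    unfolding G_def by (cases zs; cases "tl zs") auto
  show "zs \<in> (\<lambda>(ys,x). x#ys) ` (SIGMA ys:G (Suc n). {x. valid x \<and> compat x (hd ys)})"
    using g l unfolding z G_def by (auto intro!: image_eqI[where x="(y#ys, x)"])
next
  fix zs assume "zs \<in> (\<lambda>(ys,x). x#ys) ` (SIGMA ys:G (Suc n). {x. valid x \<and> compat x (hd ys)})"
  then obtain x ys where z: "zs = x#ys" and ys: "ys \<in> G (Suc n)" and v: "valid x" "compat x (hd ys)" by auto
  from ys obtain y ys' where "ys = y#ys'" unfolding G_def by (cases ys) auto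
  thus "zs \<in> G (Suc (Suc n))" using ys v z unfolding G_def by auto
qed

lemma aux: "real (2*s) \<le> real (31*w) \<Longrightarrow> real s \<le> 31/2 * real w" by simp

lemma sumG: "(\<Sum>xs\<in>G (Suc n). real (wt (hd xs))) \<le> (\<Sum>xs\<in>G 1. real (wt (hd xs))) * (31/2)^n"
proof (induction n)
  case 0 show ?case by simp
next
  case (Suc n)
  have inj: "inj_on (\<lambda>(ys,x). x#ys) (SIGMA ys:G (Suc n). {x. valid x \<and> compat x (hd ys)})"
    by (auto simp: inj_on_def)
  have "(\<Sum>xs\<in>G (Suc (Suc n)). real (wt (hd xs)))
      = (\<Sum>(ys,x)\<in>(SIGMA ys:G (Suc n). {x. valid x \<and> compat x (hd ys)}). real (wt x))"
    unfolding G_Suc by (subst sum.reindex[OF inj]) (simp add: case_prod_unfold)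
  also have "\<dots> = (\<Sum>ys\<in>G (Suc n). \<Sum>x\<in>{x. valid x \<and> compat x (hd ys)}. real (wt x))"
    by (rule sum.Sigma[symmetric]) (auto simp: finG)
  also have "\<dots> \<le> (\<Sum>ys\<in>G (Suc n). (31/2) * real (wt (hd ys)))"
  proof (rule sum_mono)
    fix ys
    have "2 * (\<Sum>x\<in>{x. valid x \<and> compat x (hd ys)}. wt x) \<le> 31 * wt (hd ys)" by (rule key)
    hence "real (2 * (\<Sum>x\<in>{x. valid x \<and> compat x (hd ys)}. wt x)) \<le> real (31 * wt (hd ys))"
      by (rule of_nat_mono)
    thus "(\<Sum>x\<in>{x. valid x \<and> compat x (hd ys)}. real (wt x)) \<le> (31/2) * real (wt (hd ys))"
      unfolding of_nat_sum[symmetric] by (rule aux)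
  qed
  also have "\<dots> = (31/2) * (\<Sum>ys\<in>G (Suc n). real (wt (hd ys)))" by (simp add: sum_distrib_left)
  also have "\<dots> \<le> (31/2) * ((\<Sum>xs\<in>G 1. real (wt (hd xs))) * (31/2)^n)" using Suc by simp
  finally show ?case by simp
qed

lemma wt_ge: "wt x \<ge> 51" by (cases x) (auto simp: wt.simps)

lemma cardG: "real (card (G (Suc n))) \<le> (\<Sum>xs\<in>G 1. real (wt (hd xs))) / 51 * (31/2)^n"
proof -
  have "51 * real (card (G (Suc n))) = (\<Sum>xs\<in>G (Suc n). (51::real))" by simp
  also have "\<dots> \<le> (\<Sum>xs\<in>G (Suc n). real (wt (hd xs)))"
    by (rule sum_mono) (use wt_ge in simp)
  also have "\<dots> \<le> (\<Sum>xs\<in>G 1. real (wt (hd xs))) * (31/2)^n" by (rule sumG)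
  finally show ?thesis by simp
qed
definition pos :: "nat \<Rightarrow> int \<Rightarrow> int \<Rightarrow> int \<Rightarrow> nat" where
  "pos p s d u = nat ((s + u*d) mod int p)"

lemma int_pos: "p > 0 \<Longrightarrow> int (pos p s d u) = (s + u*d) mod int p"
  unfolding pos_def by simp

lemma pos_lt: "p > 0 \<Longrightarrow> pos p s d u < p"
  unfolding pos_def by (simp add: nat_less_iff)

lemma posadd: assumes "p > 0" shows "(a + pos p s d u) mod p = pos p (s + int a) d u"
proof -
  have "int ((a + pos p s d u) mod p) = (int a + (s + u*d) mod int p) mod int p"
    using assms by (simp add: of_nat_mod int_pos)
  also have "\<dots> = (s + int a + u*d) mod int p" by (simp add: mod_add_right_eq algebra_simps)
  also have "\<dots> = int (pos p (s + int a) d u)" using assms by (simp add: int_pos)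
  finally show ?thesis by simp
qed

lemma posadd2: assumes "p > 0" shows "(pos p s d u + pos p t d v) mod p = nat ((s + t + (u+v)*d) mod int p)"
proof -
  have "int ((pos p s d u + pos p t d v) mod p) = ((s + u*d) mod int p + (t + v*d) mod int p) mod int p"
    using assms by (simp add: of_nat_mod int_pos)
  also have "\<dots> = (s + t + (u+v)*d) mod int p" by (simp add: mod_add_eq algebra_simps)
  finally show ?thesis by simp
qed

lemma pos_cong: "s + u*d = t + v*e \<Longrightarrow> pos p s d u = pos p t e v"
  unfolding pos_def by simp

lemma pos_surj:
  assumes p: "prime p" and d: "\<not> int p dvd d" and q: "q < p"
  shows "\<exists>j \<le> p div 2. q = pos p s d (int j) \<or> q = pos p s d (- int j)"
proof -
  have pp: "p > 0" using p prime_gt_0_nat by blast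
  have "prime (int p)" using p by simp
  hence "coprime (int p) d" using d prime_imp_coprime by blast
  then obtain u v where uv: "u * int p + v * d = 1"
    using bezout_int[of "int p" d] by auto
  have vd: "v * d = 1 - u * int p" using uv by linarith
  define u0 where "u0 = ((int q - s) * v) mod int p"
  have u0r: "0 \<le> u0" "u0 < int p" unfolding u0_def using pp by auto
  have "(s + u0*d) mod int p = (s + ((int q - s) * v) * d) mod int p"
    unfolding u0_def by (metis mod_add_right_eq mod_mult_left_eq)
  also have "(int q - s) * v * d = (int q - s) * (1 - u * int p)" using vd by (metis mult.assoc)
  also have "(s + (int q - s) * (1 - u * int p)) mod int p = (int q + int p * (-(int q - s) * u)) mod int p"
    by (simp add: algebra_simps)
  also have "\<dots> = int q mod int p" by simp
  also have "\<dots> = int q" using q by simp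
  finally have eq: "(s + u0*d) mod int p = int q" .
  hence qe: "q = pos p s d u0" unfolding pos_def by simp
  show ?thesis
  proof (cases "u0 \<le> int (p div 2)")
    case True
    thus ?thesis using qe u0r by (intro exI[of _ "nat u0"]) auto
  next
    case False
    have "odd p \<or> p = 2" using p prime_odd_nat[of p] prime_ge_2_nat[of p] by force
    hence "int p - u0 \<le> int (p div 2)" using False u0r by auto
    moreover have "q = pos p s d (- (int p - u0))"
    proof -
      have "(s + (- (int p - u0))*d) mod int p = (s + u0*d + int p * (-d)) mod int p"
        by (simp add: algebra_simps)
      also have "\<dots> = (s + u0*d) mod int p" by (rule mod_mult_self2)
      finally show ?thesis using qe unfolding pos_def by simp
    qed
    ultimately show ?thesis using u0r by (intro exI[of _ "nat (int p - u0)"]) auto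
  qed
qed

definition Val :: "nat \<Rightarrow> (nat set \<times> nat set \<times> nat set) set" where
 "Val p = {(A, B, C). A \<subseteq> {0..<p} \<and> B \<subseteq> {0..<p} \<and> C \<subseteq> {0..<p} \<and>
                 (\<forall>x\<in>A. \<forall>y\<in>B. \<forall>z\<in>C. (x + y) mod p \<noteq> z)}"

definition cf :: "nat \<Rightarrow> int \<Rightarrow> int \<Rightarrow> int \<Rightarrow> int \<Rightarrow> nat set \<Rightarrow> nat set \<Rightarrow> nat set \<Rightarrow> int \<Rightarrow> cfg" where
 "cf p sA sB sC d A B C u = (pos p sA d u \<in> A, pos p sB d u \<in> B, pos p sC d u \<in> C,
                              pos p sA d (-u) \<in> A, pos p sB d (-u) \<in> B, pos p sC d (-u) \<in> C)"

definition enc :: "nat \<Rightarrow> int \<Rightarrow> int \<Rightarrow> int \<Rightarrow> int \<Rightarrow> nat set \<times> nat set \<times> nat set \<Rightarrow> cfg list" where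
 "enc p sA sB sC d = (\<lambda>(A,B,C). map (\<lambda>j. cf p sA sB sC d A B C (int j)) [0..<Suc (p div 2)])"

locale edges =
  fixes p :: nat and A B C :: "nat set" and a a' b c :: nat and sA sB sC d :: int
  assumes pp: "p > 0" and V: "(A,B,C) \<in> Val p" and aA: "a \<in> A" and a'A: "a' \<in> A"
    and bB: "b \<in> B" and cC: "c \<in> C" and dd: "d = int a' - int a"
    and sCd: "sC = sB + int a" and sAd: "sA = sB + int a - int b"
    and h2: "(2*sB + int a - int b) mod int p = int c"
begin

lemma noedge: "x \<in> A \<Longrightarrow> y \<in> B \<Longrightarrow> (x + y) mod p \<in> C \<Longrightarrow> False"
  using V unfolding Val_def by blast

lemma E1: "pos p sC d u \<in> C \<Longrightarrow> pos p sB d u \<in> B \<Longrightarrow> False"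
  using noedge[OF aA, of "pos p sB d u"] posadd[OF pp, of a sB d u] sCd by auto

lemma E2: "pos p sC d u \<in> C \<Longrightarrow> pos p sB d (u-1) \<in> B \<Longrightarrow> False"
proof -
  assume c1: "pos p sC d u \<in> C" and b1: "pos p sB d (u-1) \<in> B"
  have "(a' + pos p sB d (u-1)) mod p = pos p (sB + int a') d (u-1)" by (rule posadd[OF pp])
  also have "\<dots> = pos p sC d u" by (rule pos_cong) (simp add: sCd dd algebra_simps)
  finally show False using noedge[OF a'A b1] c1 by simp
qed

lemma E3: "pos p sC d u \<in> C \<Longrightarrow> pos p sA d u \<in> A \<Longrightarrow> False"
proof -
  assume c1: "pos p sC d u \<in> C" and a1: "pos p sA d u \<in> A"
  have "(pos p sA d u + b) mod p = (b + pos p sA d u) mod p" by (simp add: add.commute)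
  also have "\<dots> = pos p (sA + int b) d u" by (rule posadd[OF pp])
  also have "\<dots> = pos p sC d u" by (rule pos_cong) (simp add: sCd sAd)
  finally show False using noedge[OF a1 bB] c1 by simp
qed

lemma E4: "pos p sA d u \<in> A \<Longrightarrow> pos p sB d (-u) \<in> B \<Longrightarrow> False"
proof -
  assume a1: "pos p sA d u \<in> A" and b1: "pos p sB d (-u) \<in> B"
  have "(pos p sA d u + pos p sB d (-u)) mod p = nat ((sA + sB + (u + -u)*d) mod int p)"
    by (rule posadd2[OF pp])
  also have "sA + sB + (u + -u)*d = 2*sB + int a - int b" by (simp add: sAd)
  also have "nat ((2*sB + int a - int b) mod int p) = c" using h2 by simp
  finally show False using noedge[OF a1 b1] cC by simp
qed

lemma valid_cf: "valid (cf p sA sB sC d A B C u)"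
  unfolding cf_def valid.simps using E1[of u] E1[of "-u"] E3[of u] E3[of "-u"] E4[of u] E4[of "-u"]
  by auto

lemma compat_cf: "compat (cf p sA sB sC d A B C u) (cf p sA sB sC d A B C (u+1))"
proof -
  have e: "- (u+1) = -u - 1" by simp
  show ?thesis unfolding cf_def compat.simps e using E2[of "u+1"] E2[of "-u"] by auto
qed

end

lemma good_nth: "(\<forall>i<length xs. valid (xs!i)) \<Longrightarrow> (\<forall>i. Suc i < length xs \<longrightarrow> compat (xs!i) (xs!Suc i)) \<Longrightarrow> good xs"
proof (induction xs rule: good.induct)
  case 1 then show ?case by simp
next
  case (2 x) then show ?case by simp
next
  case (3 x y xs)
  have v: "\<forall>i<length (y#xs). valid ((y#xs)!i)"
  proof (intro allI impI)
    fix i assume "i < length (y#xs)"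
    hence "Suc i < length (x#y#xs)" by simp
    thus "valid ((y#xs)!i)" using "3.prems"(1) by (metis nth_Cons_Suc)
  qed
  have w: "\<forall>i. Suc i < length (y#xs) \<longrightarrow> compat ((y#xs)!i) ((y#xs)!Suc i)"
  proof (intro allI impI)
    fix i assume "Suc i < length (y#xs)"
    hence "Suc (Suc i) < length (x#y#xs)" by simp
    thus "compat ((y#xs)!i) ((y#xs)!Suc i)" using "3.prems"(2) by (metis nth_Cons_Suc)
  qed
  have "good (y#xs)" using v w by (rule "3.IH")
  moreover have "valid x" using "3.prems"(1) by (metis length_Cons nth_Cons_0 zero_less_Suc)
  moreover have "compat x y" using "3.prems"(2) by fastforce
  ultimately show ?case by simp
qed

lemma (in edges) enc_G: "enc p sA sB sC d (A,B,C) \<in> G (Suc (p div 2))"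
proof -
  define xs where "xs = map (\<lambda>j. cf p sA sB sC d A B C (int j)) [0..<Suc (p div 2)]"
  have l: "length xs = Suc (p div 2)" unfolding xs_def by simp
  have v: "\<forall>i<length xs. valid (xs!i)"
  proof (intro allI impI)
    fix i assume "i < length xs"
    hence "xs ! i = cf p sA sB sC d A B C (int i)" unfolding xs_def by (simp del: upt_Suc)
    thus "valid (xs!i)" using valid_cf by simp
  qed
  have w: "\<forall>i. Suc i < length xs \<longrightarrow> compat (xs!i) (xs!Suc i)"
  proof (intro allI impI)
    fix i assume i: "Suc i < length xs"
    hence "xs ! i = cf p sA sB sC d A B C (int i)" unfolding xs_def by (simp del: upt_Suc)
    moreover have "xs ! Suc i = cf p sA sB sC d A B C (int i + 1)" using i unfolding xs_def by (simp del: upt_Suc add: add.commute)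
    ultimately show "compat (xs!i) (xs!Suc i)" using compat_cf by simp
  qed
  have "good xs" using v w by (rule good_nth)
  thus ?thesis using l unfolding G_def enc_def xs_def by simp
qed

lemma subset_eqI2: "A \<subseteq> {0..<p} \<Longrightarrow> A' \<subseteq> {0..<p} \<Longrightarrow> (\<And>q. q < p \<Longrightarrow> q \<in> A \<longleftrightarrow> q \<in> A') \<Longrightarrow> A = A'"
  by auto

lemma enc_inj:
  assumes p: "prime p" and d: "\<not> int p dvd d"
  shows "inj_on (enc p sA sB sC d) (Val p)"
proof (rule inj_onI)
  fix X Y
  assume X: "X \<in> Val p" and Y: "Y \<in> Val p" and eXY: "enc p sA sB sC d X = enc p sA sB sC d Y"
  obtain A B C where XA: "X = (A,B,C)" by (cases X) auto
  obtain A' B' C' where YA: "Y = (A',B',C')" by (cases Y) auto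
  have v1: "(A,B,C) \<in> Val p" and v2: "(A',B',C') \<in> Val p" using X Y XA YA by auto
  have e: "enc p sA sB sC d (A,B,C) = enc p sA sB sC d (A',B',C')" using eXY XA YA by simp
  have eq: "\<And>j. j \<le> p div 2 \<Longrightarrow> cf p sA sB sC d A B C (int j) = cf p sA sB sC d A' B' C' (int j)"
  proof -
    fix j assume "j \<le> p div 2"
    hence j: "j \<in> set [0..<Suc (p div 2)]" by (simp add: less_Suc_eq_le del: upt_Suc)
    have "\<forall>x\<in>set [0..<Suc (p div 2)]. cf p sA sB sC d A B C (int x) = cf p sA sB sC d A' B' C' (int x)"
      using e unfolding enc_def map_eq_conv by (simp del: upt_Suc)
    thus "cf p sA sB sC d A B C (int j) = cf p sA sB sC d A' B' C' (int j)" using j by blast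
  qed
  have s: "A \<subseteq> {0..<p}" "B \<subseteq> {0..<p}" "C \<subseteq> {0..<p}" "A' \<subseteq> {0..<p}" "B' \<subseteq> {0..<p}" "C' \<subseteq> {0..<p}"
    using v1 v2 unfolding Val_def by auto
  have "A = A'"
  proof (rule subset_eqI2[OF s(1) s(4)])
    fix q assume "q < p"
    then obtain j where "j \<le> p div 2" "q = pos p sA d (int j) \<or> q = pos p sA d (- int j)"
      using pos_surj[OF p d] by blast
    thus "q \<in> A \<longleftrightarrow> q \<in> A'" using eq[of j] unfolding cf_def by auto
  qed
  moreover have "B = B'"
  proof (rule subset_eqI2[OF s(2) s(5)])
    fix q assume "q < p"
    then obtain j where "j \<le> p div 2" "q = pos p sB d (int j) \<or> q = pos p sB d (- int j)"
      using pos_surj[OF p d] by blast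
    thus "q \<in> B \<longleftrightarrow> q \<in> B'" using eq[of j] unfolding cf_def by auto
  qed
  moreover have "C = C'"
  proof (rule subset_eqI2[OF s(3) s(6)])
    fix q assume "q < p"
    then obtain j where "j \<le> p div 2" "q = pos p sC d (int j) \<or> q = pos p sC d (- int j)"
      using pos_surj[OF p d] by blast
    thus "q \<in> C \<longleftrightarrow> q \<in> C'" using eq[of j] unfolding cf_def by auto
  qed
  ultimately show "X = Y" using XA YA by simp
qed

definition S :: "nat \<Rightarrow> nat \<Rightarrow> nat \<Rightarrow> nat \<Rightarrow> nat \<Rightarrow> (nat set \<times> nat set \<times> nat set) set" where
  "S p a a' b c = {(A,B,C) \<in> Val p. a \<in> A \<and> a' \<in> A \<and> b \<in> B \<and> c \<in> C}"

lemma card_S: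
  assumes p: "prime p" and p2: "p \<noteq> 2" and a: "a < p" and a': "a' < p" and aa: "a \<noteq> a'"
  shows "card (S p a a' b c) \<le> card (G (Suc (p div 2)))"
proof -
  have pp: "p > 0" using p prime_gt_0_nat by blast
  have odd: "odd p" using p p2 prime_odd_nat[of p] prime_ge_2_nat[of p] by force
  define d where "d = int a' - int a"
  have dn: "\<not> int p dvd d"
  proof
    assume "int p dvd d"
    moreover have "d \<noteq> 0" using aa unfolding d_def by simp
    ultimately have "\<bar>int p\<bar> \<le> \<bar>d\<bar>" using dvd_imp_le_int by blast
    thus False using a a' unfolding d_def by linarith
  qed
  define sB where "sB = (int c - int a + int b) * ((int p + 1) div 2)"
  define sC where "sC = sB + int a"
  define sA where "sA = sB + int a - int b"
  have h2: "(2*sB + int a - int b) mod int p = int c" if "c < p"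
  proof -
    obtain k where k: "p = 2*k+1" using odd oddE by blast
    have "int p + 1 = 2 * (int k + 1)" using k by simp
    hence "2 * ((int p + 1) div 2) = int p + 1" by simp
    hence "2*sB = (int c - int a + int b) * (int p + 1)" unfolding sB_def by (metis mult.left_commute)
    hence "2*sB + int a - int b = int c + int p * (int c - int a + int b)" by (simp add: algebra_simps)
    hence "(2*sB + int a - int b) mod int p = int c mod int p" by simp
    thus ?thesis using that by simp
  qed
  show ?thesis
  proof (cases "c < p")
    case False
    have "S p a a' b c = {}" using False unfolding S_def Val_def by auto
    thus ?thesis by simp
  next
    case True
    have "card (S p a a' b c) \<le> card (G (Suc (p div 2)))"
    proof (rule card_inj_on_le[where f = "enc p sA sB sC d"])
      show "inj_on (enc p sA sB sC d) (S p a a' b c)"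
        using enc_inj[OF p dn] by (rule inj_on_subset) (auto simp: S_def)
      show "enc p sA sB sC d ` S p a a' b c \<subseteq> G (Suc (p div 2))"
      proof clarify
        fix A B C assume "(A,B,C) \<in> S p a a' b c"
        hence "edges p A B C a a' b c sA sB sC d"
          using pp h2[OF True] unfolding S_def by unfold_locales (auto simp: d_def sC_def sA_def)
        thus "enc p sA sB sC d (A,B,C) \<in> G (Suc (p div 2))" by (rule edges.enc_G)
      qed
      show "finite (G (Suc (p div 2)))" by (rule finG)
    qed
    thus ?thesis .
  qed
qed

definition NN :: "nat \<Rightarrow> (nat set \<times> nat set \<times> nat set) set" where
  "NN p = {(A,B,C) \<in> Val p. A \<noteq> {} \<and> B \<noteq> {} \<and> C \<noteq> {}}"
definition N2 :: "nat \<Rightarrow> (nat set \<times> nat set \<times> nat set) set" where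
  "N2 p = {(A,B,C) \<in> Val p. 2 \<le> card A \<and> B \<noteq> {} \<and> C \<noteq> {}}"

lemma finite_Val: "finite (Val p)"
proof -
  have "Val p \<subseteq> Pow {0..<p} \<times> Pow {0..<p} \<times> Pow {0..<p}" unfolding Val_def by auto
  thus ?thesis by (rule finite_subset) auto
qed

lemma two_elems: "finite A \<Longrightarrow> 2 \<le> card A \<Longrightarrow> \<exists>a a'. a \<in> A \<and> a' \<in> A \<and> a \<noteq> a'"
  using card_le_Suc0_iff_eq[of A] by force

lemma card_N2:
  assumes p: "prime p" and p2: "p \<noteq> 2"
  shows "card (N2 p) \<le> p^4 * card (G (Suc (p div 2)))"
proof -
  define I where "I = {(a,a',b,c). a < p \<and> a' < p \<and> a \<noteq> a' \<and> b < p \<and> c < p}"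
  have IR: "I \<subseteq> {0..<p} \<times> {0..<p} \<times> {0..<p} \<times> {0..<p}" unfolding I_def by auto
  have fI: "finite I" by (rule finite_subset[OF IR]) auto
  have cI: "card I \<le> p^4"
  proof -
    have "card I \<le> card ({0..<p} \<times> {0..<p} \<times> {0..<p} \<times> {0..<p})" by (rule card_mono) (auto simp: IR)
    also have "\<dots> = p^4" by (simp add: card_cartesian_product power4_eq_xxxx)
    finally show ?thesis .
  qed
  have sub: "N2 p \<subseteq> (\<Union>(a,a',b,c)\<in>I. S p a a' b c)"
  proof clarify
    fix A B C assume h: "(A,B,C) \<in> N2 p"
    hence V: "(A,B,C) \<in> Val p" and cA: "2 \<le> card A" and B: "B \<noteq> {}" and C: "C \<noteq> {}" unfolding N2_def by auto
    have sub: "A \<subseteq> {0..<p}" "B \<subseteq> {0..<p}" "C \<subseteq> {0..<p}" using V unfolding Val_def by auto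
    hence "finite A" using finite_subset by blast
    then obtain a a' where aa: "a \<in> A" "a' \<in> A" "a \<noteq> a'" using two_elems cA by blast
    obtain b c where bc: "b \<in> B" "c \<in> C" using B C by blast
    have "(a,a',b,c) \<in> I" using aa bc sub unfolding I_def by auto
    moreover have "(A,B,C) \<in> S p a a' b c" using V aa bc unfolding S_def by auto
    ultimately show "(A,B,C) \<in> (\<Union>(a,a',b,c)\<in>I. S p a a' b c)" by blast
  qed
  have "card (N2 p) \<le> card (\<Union>(a,a',b,c)\<in>I. S p a a' b c)"
    by (rule card_mono[OF _ sub]) (auto intro!: finite_subset[OF _ finite_Val] simp: S_def fI)
  also have "\<dots> \<le> (\<Sum>(a,a',b,c)\<in>I. card (S p a a' b c))"
    unfolding case_prod_unfold by (rule card_UN_le[OF fI])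
  also have "\<dots> \<le> card I * card (G (Suc (p div 2)))"
  proof (rule sum_bounded_above[where K = "card (G (Suc (p div 2)))", simplified])
    fix i assume "i \<in> I"
    then obtain a a' b c where i: "i = (a,a',b,c)" "a < p" "a' < p" "a \<noteq> a'" unfolding I_def by auto
    show "(case i of (a,a',b,c) \<Rightarrow> card (S p a a' b c)) \<le> card (G (Suc (p div 2)))"
      using card_S[OF p p2 i(2) i(3) i(4)] i(1) by simp
  qed
  also have "\<dots> \<le> p^4 * card (G (Suc (p div 2)))" using cI by simp
  finally show ?thesis .
qed

lemma Val_swap: "(A,B,C) \<in> Val p \<Longrightarrow> (B,A,C) \<in> Val p"
  unfolding Val_def by (clarsimp, metis add.commute)

lemma card_NN:
  assumes p: "prime p" and p2: "p \<noteq> 2"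
  shows "card (NN p) \<le> 2 * (p^4 * card (G (Suc (p div 2)))) + p^2 * 2^p"
proof -
  define N2' where "N2' = (\<lambda>(A,B,C). (B,A,C)) ` N2 p"
  define N11 where "N11 = (\<Union>a\<in>{0..<p}. \<Union>b\<in>{0..<p}. {{a}} \<times> {{b}} \<times> Pow {0..<p})"
  have sub: "NN p \<subseteq> N2 p \<union> N2' \<union> N11"
  proof clarify
    fix A B C assume h: "(A,B,C) \<in> NN p" "(A,B,C) \<notin> N11" "(A,B,C) \<notin> N2'"
    hence V: "(A,B,C) \<in> Val p" and A: "A \<noteq> {}" and B: "B \<noteq> {}" and C: "C \<noteq> {}" unfolding NN_def by auto
    have sub: "A \<subseteq> {0..<p}" "B \<subseteq> {0..<p}" "C \<subseteq> {0..<p}" using V unfolding Val_def by auto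
    have fA: "finite A" using sub(1) finite_subset by blast
    have fB: "finite B" using sub(2) finite_subset by blast
    show "(A,B,C) \<in> N2 p"
    proof (rule ccontr)
      assume nA: "(A,B,C) \<notin> N2 p"
      hence cA: "card A \<le> 1" using V B C unfolding N2_def by auto
      have "(B,A,C) \<notin> N2 p" using h(3) unfolding N2'_def by (metis (no_types, lifting) case_prod_conv image_eqI)
      hence cB: "card B \<le> 1" using Val_swap[OF V] A C unfolding N2_def by auto
      obtain a where a: "A = {a}" using cA A fA by (metis One_nat_def card_0_eq card_1_singletonE le_SucE le_zero_eq)
      obtain b where b: "B = {b}" using cB B fB by (metis One_nat_def card_0_eq card_1_singletonE le_SucE le_zero_eq)
      have "(A,B,C) \<in> N11" using a b sub unfolding N11_def by auto
      thus False using h(2) by simp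
    qed
  qed
  have fN2: "finite (N2 p)" unfolding N2_def by (rule finite_subset[OF _ finite_Val]) auto
  have "card (NN p) \<le> card (N2 p \<union> N2' \<union> N11)"
    by (rule card_mono[OF _ sub]) (auto simp: N2'_def N11_def fN2)
  also have "\<dots> \<le> card (N2 p) + card N2' + card N11" by (meson card_Un_le add_le_mono le_trans order_refl)
  also have "card N2' \<le> card (N2 p)" unfolding N2'_def by (rule card_image_le[OF fN2])
  also have "card N11 \<le> p^2 * 2^p"
  proof -
    have "card N11 \<le> (\<Sum>a\<in>{0..<p}. card (\<Union>b\<in>{0..<p}. {{a}} \<times> {{b}} \<times> Pow {0..<p}))"
      unfolding N11_def by (rule card_UN_le) simp
    also have "\<dots> \<le> (\<Sum>a\<in>{0..<p}. \<Sum>b\<in>{0..<p}. card ({{a}} \<times> {{b}} \<times> Pow {0..<p}))"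
      by (rule sum_mono, rule card_UN_le) simp
    also have "\<dots> = p^2 * 2^p" by (simp add: card_cartesian_product card_Pow power2_eq_square)
    finally show ?thesis .
  qed
  finally show ?thesis using card_N2[OF p p2] by linarith
qed

lemma T_Val: "T p = card (Val p)" unfolding T_def Val_def by simp

lemma T_bounds:
  "real (T p) \<le> 3 * 4^p + real (card (NN p))" "3 * 4^p - 3 * 2^p \<le> real (T p)"
proof -
  define R where "R = {0..<p::nat}"
  define EA where "EA = {{}::nat set} \<times> Pow R \<times> Pow R"
  define EB where "EB = Pow R \<times> {{}::nat set} \<times> Pow R"
  define EC where "EC = Pow R \<times> Pow R \<times> {{}::nat set}"
  have fR: "finite R" unfolding R_def by simp
  have cR: "card R = p" unfolding R_def by simp
  have fin: "finite EA" "finite EB" "finite EC" unfolding EA_def EB_def EC_def using fR by auto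
  have c4: "card EA = 4^p" "card EB = 4^p" "card EC = 4^p"
    unfolding EA_def EB_def EC_def using fR cR
    by (simp_all add: card_cartesian_product card_Pow power_mult_distrib[symmetric])
  have EV: "EA \<union> EB \<union> EC \<subseteq> Val p" unfolding EA_def EB_def EC_def Val_def R_def by auto
  have VE: "Val p \<subseteq> EA \<union> EB \<union> EC \<union> NN p" unfolding EA_def EB_def EC_def Val_def R_def NN_def by auto
  have fN: "finite (NN p)" unfolding NN_def by (rule finite_subset[OF _ finite_Val]) auto
  have "T p \<le> card (EA \<union> EB \<union> EC \<union> NN p)"
    unfolding T_Val by (rule card_mono[OF _ VE]) (use fin fN in auto)
  also have "\<dots> \<le> card EA + card EB + card EC + card (NN p)"
    by (meson card_Un_le add_le_mono le_trans order_refl)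
  finally have "T p \<le> 3 * 4^p + card (NN p)" using c4 by simp
  hence "real (T p) \<le> real (3 * 4^p + card (NN p))" by (rule of_nat_mono)
  thus "real (T p) \<le> 3 * 4^p + real (card (NN p))" by simp
  have i1: "card (EA \<inter> EB) \<le> 2^p"
  proof -
    have "EA \<inter> EB \<subseteq> {{}::nat set} \<times> {{}::nat set} \<times> Pow R" unfolding EA_def EB_def by auto
    hence "card (EA \<inter> EB) \<le> card ({{}::nat set} \<times> {{}::nat set} \<times> Pow R)" by (rule card_mono[rotated]) (simp add: fR)
    thus ?thesis using fR cR by (simp add: card_cartesian_product card_Pow)
  qed
  have i2: "card ((EA \<union> EB) \<inter> EC) \<le> 2 * 2^p"
  proof -
    have "(EA \<union> EB) \<inter> EC \<subseteq> ({{}::nat set} \<times> Pow R \<times> {{}::nat set}) \<union> (Pow R \<times> {{}::nat set} \<times> {{}::nat set})" unfolding EA_def EB_def EC_def by auto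
    hence "card ((EA \<union> EB) \<inter> EC) \<le> card (({{}::nat set} \<times> Pow R \<times> {{}::nat set}) \<union> (Pow R \<times> {{}::nat set} \<times> {{}::nat set}))"
      by (rule card_mono[rotated]) (simp add: fR)
    also have "\<dots> \<le> card ({{}::nat set} \<times> Pow R \<times> {{}::nat set}) + card (Pow R \<times> {{}::nat set} \<times> {{}::nat set})" by (rule card_Un_le)
    also have "\<dots> = 2 * 2^p" using fR cR by (simp add: card_cartesian_product card_Pow)
    finally show ?thesis .
  qed
  have u1: "card (EA \<union> EB) + card (EA \<inter> EB) = card EA + card EB" using card_Un_Int[OF fin(1) fin(2)] by simp
  have u2: "card (EA \<union> EB \<union> EC) + card ((EA \<union> EB) \<inter> EC) = card (EA \<union> EB) + card EC"
    using card_Un_Int[of "EA \<union> EB" EC] fin by simp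
  have "card (EA \<union> EB \<union> EC) \<le> T p" unfolding T_Val by (rule card_mono[OF finite_Val EV])
  hence "real (card (EA \<union> EB \<union> EC)) \<le> real (T p)" by simp
  moreover have "real (card (EA \<union> EB)) + real (card (EA \<inter> EB)) = 4^p + 4^p"
    using u1 c4 by (metis of_nat_add of_nat_numeral of_nat_power)
  moreover have "real (card (EA \<union> EB \<union> EC)) + real (card ((EA \<union> EB) \<inter> EC)) = real (card (EA \<union> EB)) + 4^p"
    using u2 c4 by (metis of_nat_add of_nat_numeral of_nat_power)
  moreover have "real (card (EA \<inter> EB)) \<le> 2^p" using i1 by (metis of_nat_le_iff of_nat_numeral of_nat_power)
  moreover have "real (card ((EA \<union> EB) \<inter> EC)) \<le> 2 * 2^p" using i2
    by (metis of_nat_le_iff of_nat_mult of_nat_numeral of_nat_power)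
  ultimately show "3 * 4^p - 3 * 2^p \<le> real (T p)" by linarith
qed

definition K1 :: real where "K1 = (\<Sum>xs\<in>G 1. real (wt (hd xs))) / 51"

lemma K1_nonneg: "K1 \<ge> 0" unfolding K1_def by (simp add: sum_nonneg)

lemma cardG_exp: "real (card (G (Suc (p div 2)))) \<le> K1 * (63/16)^p"
proof -
  have "real (card (G (Suc (p div 2)))) \<le> K1 * (31/2)^(p div 2)" using cardG[of "p div 2"] unfolding K1_def by simp
  also have "(31/2::real)^(p div 2) \<le> ((63/16)^2)^(p div 2)" by (rule power_mono) (auto simp: power2_eq_square)
  also have "\<dots> = (63/16)^(2 * (p div 2))" by (simp add: power_mult)
  also have "\<dots> \<le> (63/16)^p" by (rule power_increasing) auto
  finally show ?thesis using K1_nonneg by (simp add: mult_left_mono)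
qed

lemma bound_main:
  assumes p: "prime p" and p2: "p \<noteq> 2"
  shows "\<bar>real (T p) - 3 * 4^p\<bar> \<le> 3 * 2^p + real p^2 * 2^p + 2 * K1 * (real p^4 * (63/16)^p)"
proof -
  have "card (NN p) \<le> 2 * (p^4 * card (G (Suc (p div 2)))) + p^2 * 2^p" by (rule card_NN[OF p p2])
  hence "real (card (NN p)) \<le> real (2 * (p^4 * card (G (Suc (p div 2)))) + p^2 * 2^p)" by (rule of_nat_mono)
  hence "real (card (NN p)) \<le> 2 * (real p^4 * real (card (G (Suc (p div 2))))) + real p^2 * 2^p" by simp
  also have "\<dots> \<le> 2 * (real p^4 * (K1 * (63/16)^p)) + real p^2 * 2^p"
    using cardG_exp[of p] by (simp add: mult_left_mono)
  finally have "real (card (NN p)) \<le> 2 * K1 * (real p^4 * (63/16)^p) + real p^2 * 2^p" by (simp add: algebra_simps)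
  thus ?thesis using T_bounds[of p] by (simp add: abs_le_iff) (smt (verit) zero_le_power)
qed

theorem theorem4:
  shows "\<exists>(c::real) (K::real) (p0::nat). c > 0 \<and> K > 0 \<and>
           (\<forall>p. prime p \<and> p \<ge> p0 \<longrightarrow>
              \<bar>real (T p) - 3 * 4 ^ p\<bar> \<le> K * (4 - c) ^ p)"
proof -
  have e1: "eventually (\<lambda>n::nat. real n ^ 4 * (63/16::real)^n \<le> (127/32)^n) at_top" by real_asymp
  have e2: "eventually (\<lambda>n::nat. real n ^ 2 * (2::real)^n \<le> (127/32)^n) at_top" by real_asymp
  obtain p1 where p1: "\<And>n. n \<ge> p1 \<Longrightarrow> real n ^ 4 * (63/16::real)^n \<le> (127/32)^n \<and> real n ^ 2 * (2::real)^n \<le> (127/32)^n"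
    using eventually_conj[OF e1 e2] unfolding eventually_at_top_linorder by blast
  show ?thesis
  proof (rule exI[of _ "1/32"], rule exI[of _ "4 + 2*K1"], rule exI[of _ "max p1 3"], intro conjI allI impI)
    show "(0::real) < 1/32" by simp
    show "(0::real) < 4 + 2*K1" using K1_nonneg by simp
    fix p assume h: "prime p \<and> max p1 3 \<le> p"
    hence p: "prime p" and p2: "p \<noteq> 2" and pp1: "p \<ge> p1" by auto
    have b: "\<bar>real (T p) - 3 * 4^p\<bar> \<le> 3 * 2^p + real p^2 * 2^p + 2 * K1 * (real p^4 * (63/16)^p)"
      by (rule bound_main[OF p p2])
    have t1: "real p ^ 4 * (63/16::real)^p \<le> (127/32)^p" and t2: "real p ^ 2 * (2::real)^p \<le> (127/32)^p"
      using p1[OF pp1] by auto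
    have t3: "(2::real)^p \<le> (127/32)^p" by (rule power_mono) auto
    have "2 * K1 * (real p^4 * (63/16)^p) \<le> 2 * K1 * (127/32)^p"
      using t1 K1_nonneg by (simp add: mult_left_mono)
    hence "\<bar>real (T p) - 3 * 4^p\<bar> \<le> (4 + 2*K1) * (127/32)^p"
      using b t2 t3 by (simp add: algebra_simps)
    thus "\<bar>real (T p) - 3 * 4^p\<bar> \<le> (4 + 2*K1) * (4 - 1/32)^p" by simp
  qed
qed
end
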